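(* Fix $0\le\delta<1/2$. There is a constant $c_\delta>0$ depending only on $\delta$ such that for all integers $m\ge2$ and even $t\ge2$, setting $\sigma:=m^t$ and $\alpha:=2^{\delta t/2}m^{(1-\delta/2)t}$, there exist an integer $g\ge c_\delta\,2^{(1-h(\delta))t}$ and sets $X^{(1)},\dots,X^{(g)},Y^{(1)},\dots,Y^{(g)}\subseteq\{0,1,\dots,\sigma\}$ such that: (1) $|X^{(i)}|=|Y^{(i)}|=\sigma^{1/2}$ for all $1\le i\le g$; (2) $|X^{(i)}+Y^{(i)}|=\sigma$ for all $1\le i\le g$; (3) $|X^{(i)}+Y^{(j)}|\le\alpha$ for all $i\ne j$.
   Context: $h$ is the binary entropy function $h(x)=-x\log_2x-(1-x)\log_2(1-x)$. For sets $P,Q$ of integers, $P+Q=\{p+q:p\in P,q\in Q\}$. *)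

theory Defs
  imports Complex_Main
begin

definition bin_entropy :: "real \<Rightarrow> real" where
  "bin_entropy x = (if x = 0 \<or> x = 1 then 0
     else - x * log 2 x - (1 - x) * log 2 (1 - x))"

definition sumset :: "int set \<Rightarrow> int set \<Rightarrow> int set" where
  "sumset P Q = {p + q | p q. p \<in> P \<and> q \<in> Q}"

end

theory Submission
  imports Defs "HOL-Library.FuncSet" "HOL.Binomial_Plus"
begin


lemma mod_pow_digits:
  fixes m x :: nat
  shows "x mod m^t = (\<Sum>k<t. (x div m^k mod m) * m^k)"
proof (induction t)
  case 0 then show ?case by simp
next
  case (Suc t)
  have "x mod m^Suc t = x mod (m^t * m)" by (simp add: mult.commute)
  also have "\<dots> = m^t * (x div m^t mod m) + x mod m^t" by (rule mod_mult2_eq)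
  finally show ?case using Suc by (simp add: algebra_simps)
qed

definition digv :: "nat \<Rightarrow> nat \<Rightarrow> nat \<Rightarrow> (nat \<Rightarrow> nat)" where
  "digv m t x = restrict (\<lambda>k. x div m^k mod m) {0..<t}"

lemma digv_bij:
  assumes "m \<ge> 2"
  shows "bij_betw (digv m t) {0..<m^t} (PiE {0..<t} (\<lambda>_. {0..<m}))"
proof -
  have inj: "inj_on (digv m t) {0..<m^t}"
  proof
    fix x y assume x: "x \<in> {0..<m^t}" and y: "y \<in> {0..<m^t}" and e: "digv m t x = digv m t y"
    have "\<forall>k<t. x div m^k mod m = y div m^k mod m"
    proof (intro allI impI)
      fix k assume "k < t"
      from fun_cong[OF e, of k] show "x div m^k mod m = y div m^k mod m" using \<open>k<t\<close> by (simp add: digv_def)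
    qed
    then have "(\<Sum>k<t. (x div m^k mod m) * m^k) = (\<Sum>k<t. (y div m^k mod m) * m^k)"
      by (intro sum.cong) auto
    then have "x mod m^t = y mod m^t" by (simp add: mod_pow_digits)
    then show "x = y" using x y by simp
  qed
  have sub: "digv m t ` {0..<m^t} \<subseteq> PiE {0..<t} (\<lambda>_. {0..<m})"
    using assms by (auto simp: digv_def)
  have c: "card (PiE {0..<t} (\<lambda>_. {0..<m::nat})) = m^t"
    by (simp add: card_PiE)
  have "card (digv m t ` {0..<m^t}) = m^t" using card_image[OF inj] by simp
  then have "digv m t ` {0..<m^t} = PiE {0..<t} (\<lambda>_. {0..<m})"
    using sub c by (intro card_subset_eq) (auto simp: finite_PiE)
  then show ?thesis using inj by (simp add: bij_betw_def)
qed

lemma digv_inverse: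
  assumes "m \<ge> 2" and "e \<in> PiE {0..<t} (\<lambda>_. {0..<m})"
  shows "(\<Sum>k<t. e k * m^k) < m^t \<and> digv m t (\<Sum>k<t. e k * m^k) = e"
proof -
  obtain x where x: "x \<in> {0..<m^t}" "digv m t x = e"
    using digv_bij[OF assms(1), of t] assms(2) unfolding bij_betw_def by (metis imageE)
  have "(\<Sum>k<t. e k * m^k) = (\<Sum>k<t. (x div m^k mod m) * m^k)"
    using x(2) by (intro sum.cong) (auto simp: digv_def)
  also have "\<dots> = x" using x(1) mod_pow_digits[of x m t] by simp
  finally show ?thesis using x by simp
qed



definition Num :: "nat \<Rightarrow> nat \<Rightarrow> (nat \<Rightarrow> nat set) \<Rightarrow> nat set" where
  "Num m t D = {x. x < m^t \<and> (\<forall>k<t. x div m^k mod m \<in> D k)}"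

definition ns :: "nat set \<Rightarrow> nat set \<Rightarrow> nat set" where
  "ns A B = {a + b | a b. a \<in> A \<and> b \<in> B}"

lemma ns_image: "ns A B = (\<lambda>(a,b). a + b) ` (A \<times> B)"
  by (auto simp: ns_def)

lemma finite_ns: "finite A \<Longrightarrow> finite B \<Longrightarrow> finite (ns A B)"
  by (simp add: ns_image)

lemma card_Num:
  assumes m: "m \<ge> 2" and D: "\<forall>k<t. D k \<subseteq> {0..<m}"
  shows "card (Num m t D) = (\<Prod>k<t. card (D k))"
proof -
  have inj: "inj_on (digv m t) (Num m t D)"
    using digv_bij[OF m, of t] unfolding bij_betw_def
    by (rule inj_on_subset[OF conjunct1]) (auto simp: Num_def)
  have "digv m t ` Num m t D = PiE {0..<t} D"
  proof
    show "digv m t ` Num m t D \<subseteq> PiE {0..<t} D"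
      by (auto simp: Num_def digv_def)
  next
    show "PiE {0..<t} D \<subseteq> digv m t ` Num m t D"
    proof
      fix e assume e: "e \<in> PiE {0..<t} D"
      then have e2: "e \<in> PiE {0..<t} (\<lambda>_. {0..<m})" using D by (auto simp: PiE_def Pi_def) (metis atLeastLessThan_iff subsetD)
      note inv = digv_inverse[OF m e2]
      have "(\<Sum>k<t. e k * m^k) \<in> Num m t D"
        unfolding Num_def
      proof (intro CollectI conjI allI impI)
        show "(\<Sum>k<t. e k * m^k) < m^t" using inv by simp
        fix k assume k: "k < t"
        have "(\<Sum>k<t. e k * m^k) div m^k mod m = e k"
          using fun_cong[OF conjunct2[OF inv], of k] k by (simp add: digv_def)
        then show "(\<Sum>k<t. e k * m^k) div m^k mod m \<in> D k" using e k by auto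
      qed
      then show "e \<in> digv m t ` Num m t D" using inv by (metis image_eqI)
    qed
  qed
  then have "card (Num m t D) = card (PiE {0..<t} D)" using card_image[OF inj] by simp
  also have "\<dots> = (\<Prod>k<t. card (D k))" by (simp add: card_PiE atLeast0LessThan)
  finally show ?thesis .
qed

lemma ns_Num_sub:
  assumes m: "m \<ge> 2"
  shows "ns (Num m t D) (Num m t E) \<subseteq> (\<lambda>e. \<Sum>k<t. e k * m^k) ` PiE {0..<t} (\<lambda>k. ns (D k) (E k))"
proof
  fix z assume "z \<in> ns (Num m t D) (Num m t E)"
  then obtain x y where z: "z = x + y" and x: "x \<in> Num m t D" and y: "y \<in> Num m t E"
    by (auto simp: ns_def)
  define e where "e = restrict (\<lambda>k. x div m^k mod m + y div m^k mod m) {0..<t}"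
  have "e \<in> PiE {0..<t} (\<lambda>k. ns (D k) (E k))"
  proof -
    have h1: "\<And>k. k<t \<Longrightarrow> x div m^k mod m \<in> D k" using x by (auto simp: Num_def)
    have h2: "\<And>k. k<t \<Longrightarrow> y div m^k mod m \<in> E k" using y by (auto simp: Num_def)
    have "\<And>k. k<t \<Longrightarrow> x div m^k mod m + y div m^k mod m \<in> ns (D k) (E k)"
      unfolding ns_def using h1 h2 by blast
    then show ?thesis by (auto simp: e_def)
  qed
  moreover have "z = (\<Sum>k<t. e k * m^k)"
  proof -
    have "x = (\<Sum>k<t. (x div m^k mod m) * m^k)" using x mod_pow_digits[of x m t] by (simp add: Num_def)
    moreover have "y = (\<Sum>k<t. (y div m^k mod m) * m^k)" using y mod_pow_digits[of y m t] by (simp add: Num_def)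
    ultimately have "z = (\<Sum>k<t. (x div m^k mod m + y div m^k mod m) * m^k)"
      by (simp add: z sum.distrib algebra_simps)
    also have "\<dots> = (\<Sum>k<t. e k * m^k)" by (intro sum.cong) (auto simp: e_def)
    finally show ?thesis .
  qed
  ultimately show "z \<in> (\<lambda>e. \<Sum>k<t. e k * m^k) ` PiE {0..<t} (\<lambda>k. ns (D k) (E k))" by blast
qed

lemma card_ns_Num_le:
  assumes m: "m \<ge> 2" and D: "\<forall>k. finite (D k)" and E: "\<forall>k. finite (E k)"
  shows "card (ns (Num m t D) (Num m t E)) \<le> (\<Prod>k<t. card (ns (D k) (E k)))"
proof -
  have fin: "finite (PiE {0..<t} (\<lambda>k. ns (D k) (E k)))"
    using D E by (intro finite_PiE) (auto intro: finite_ns)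
  have "card (ns (Num m t D) (Num m t E)) \<le> card ((\<lambda>e. \<Sum>k<t. e k * m^k) ` PiE {0..<t} (\<lambda>k. ns (D k) (E k)))"
    using fin by (intro card_mono ns_Num_sub[OF m]) auto
  also have "\<dots> \<le> card (PiE {0..<t} (\<lambda>k. ns (D k) (E k)))" using fin by (rule card_image_le)
  also have "\<dots> = (\<Prod>k<t. card (ns (D k) (E k)))" by (simp add: card_PiE atLeast0LessThan)
  finally show ?thesis .
qed

definition DS :: "nat \<Rightarrow> nat set \<Rightarrow> nat \<Rightarrow> nat set" where
  "DS m S k = (if k \<in> S then {0..<m} else {0})"
definition ET :: "nat \<Rightarrow> nat set \<Rightarrow> nat \<Rightarrow> nat set" where
  "ET m T k = (if k \<in> T then {0} else {0..<m})"

lemma card_ns_DS_ET: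
  "card (ns (DS m S k) (ET m T k)) \<le> (if k \<in> S \<and> k \<notin> T then 2 else 1) * (if k \<in> S \<or> k \<notin> T then m else 1)"
proof -
  have a: "ns {0..<m} {0} = {0..<m}" by (auto simp: ns_def)
  have b: "ns {0} {0..<m} = {0..<m}" by (force simp: ns_def)
  have c: "ns {0} {0} = {0}" by (auto simp: ns_def)
  have d: "ns {0..<m} {0..<m} \<subseteq> {0..<2*m}" by (auto simp: ns_def)
  have "card (ns {0..<m} {0..<m}) \<le> 2 * m" using card_mono[OF _ d] by simp
  then show ?thesis using a b c by (auto simp: DS_def ET_def)
qed

lemma prod_if_pow:
  "finite A \<Longrightarrow> (\<Prod>k\<in>A. (if P k then (c::nat) else 1)) = c ^ card {k\<in>A. P k}"
  by (simp add: prod.inter_filter[symmetric])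

lemma card_cross:
  assumes m: "m \<ge> 2" and S: "S \<subseteq> {0..<t}" and T: "T \<subseteq> {0..<t}"
  shows "card (ns (Num m t (DS m S)) (Num m t (ET m T))) \<le> 2 ^ card (S - T) * m ^ (t - card (T - S))"
proof -
  have "card (ns (Num m t (DS m S)) (Num m t (ET m T))) \<le> (\<Prod>k<t. card (ns (DS m S k) (ET m T k)))"
    by (rule card_ns_Num_le[OF m]) (auto simp: DS_def ET_def)
  also have "\<dots> \<le> (\<Prod>k<t. (if k \<in> S \<and> k \<notin> T then 2 else 1) * (if k \<in> S \<or> k \<notin> T then m else 1))"
    by (intro prod_mono conjI zero_le card_ns_DS_ET)
  also have "\<dots> = (\<Prod>k<t. (if k \<in> S \<and> k \<notin> T then 2 else 1)) * (\<Prod>k<t. (if k \<in> S \<or> k \<notin> T then m else 1))"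
    by (rule prod.distrib)
  also have "\<dots> = 2 ^ card {k\<in>{..<t}. k \<in> S \<and> k \<notin> T} * m ^ card {k\<in>{..<t}. k \<in> S \<or> k \<notin> T}"
    by (simp add: prod_if_pow)
  also have "{k\<in>{..<t}. k \<in> S \<and> k \<notin> T} = S - T" using S by auto
  also have "{k\<in>{..<t}. k \<in> S \<or> k \<notin> T} = {..<t} - (T - S)" using S by auto
  also have "card ({..<t} - (T - S)) = t - card (T - S)"
    using T by (subst card_Diff_subset) (auto intro: finite_subset)
  finally show ?thesis .
qed

lemma card_diag:
  assumes m: "m \<ge> 2" and S: "S \<subseteq> {0..<t}"
  shows "card (ns (Num m t (DS m S)) (Num m t (ET m S))) = m ^ t"
proof -
  have up: "card (ns (Num m t (DS m S)) (Num m t (ET m S))) \<le> m ^ t"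
    using card_cross[OF m S S] by simp
  have sub: "{0..<m^t} \<subseteq> ns (Num m t (DS m S)) (Num m t (ET m S))"
  proof
    fix z assume z: "z \<in> {0..<m^t}"
    define e where "e = digv m t z"
    have e: "e \<in> PiE {0..<t} (\<lambda>_. {0..<m})" using digv_bij[OF m, of t] z
      unfolding bij_betw_def e_def by blast
    define e1 where "e1 = restrict (\<lambda>k. if k \<in> S then e k else 0) {0..<t}"
    define e2 where "e2 = restrict (\<lambda>k. if k \<in> S then 0 else e k) {0..<t}"
    have e1: "e1 \<in> PiE {0..<t} (\<lambda>_. {0..<m})" using e m by (auto simp: e1_def)
    have e2: "e2 \<in> PiE {0..<t} (\<lambda>_. {0..<m})" using e m by (auto simp: e2_def)
    note i1 = digv_inverse[OF m e1] and i2 = digv_inverse[OF m e2]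
    define x where "x = (\<Sum>k<t. e1 k * m^k)"
    define y where "y = (\<Sum>k<t. e2 k * m^k)"
    have x: "x \<in> Num m t (DS m S)"
      unfolding Num_def DS_def
    proof (intro CollectI conjI allI impI)
      show "x < m^t" using i1 x_def by simp
      fix k assume k: "k < t"
      have "x div m^k mod m = e1 k" using fun_cong[OF conjunct2[OF i1], of k] k
        by (simp add: x_def digv_def)
      then show "x div m ^ k mod m \<in> (if k \<in> S then {0..<m} else {0})"
        using k e m by (auto simp: e1_def)
    qed
    have y: "y \<in> Num m t (ET m S)"
      unfolding Num_def ET_def
    proof (intro CollectI conjI allI impI)
      show "y < m^t" using i2 y_def by simp
      fix k assume k: "k < t"
      have "y div m^k mod m = e2 k" using fun_cong[OF conjunct2[OF i2], of k] k
        by (simp add: y_def digv_def)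
      then show "y div m ^ k mod m \<in> (if k \<in> S then {0} else {0..<m})"
        using k e m by (auto simp: e2_def)
    qed
    have "x + y = (\<Sum>k<t. (e1 k + e2 k) * m^k)" by (simp add: x_def y_def sum.distrib algebra_simps)
    also have "\<dots> = (\<Sum>k<t. (z div m^k mod m) * m^k)"
      by (intro sum.cong) (auto simp: e1_def e2_def e_def digv_def)
    also have "\<dots> = z" using z mod_pow_digits[of z m t] by simp
    finally show "z \<in> ns (Num m t (DS m S)) (Num m t (ET m S))"
      using x y by (force simp: ns_def)
  qed
  have fin: "finite (ns (Num m t (DS m S)) (Num m t (ET m S)))"
    by (intro finite_ns) (auto simp: Num_def)
  have "m ^ t \<le> card (ns (Num m t (DS m S)) (Num m t (ET m S)))"
    using card_mono[OF fin sub] by simp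
  with up show ?thesis by (rule antisym)
qed


lemma card_DS:
  assumes "m \<ge> 2" "S \<subseteq> {0..<t}"
  shows "card (Num m t (DS m S)) = m ^ card S"
proof -
  have "card (Num m t (DS m S)) = (\<Prod>k<t. card (DS m S k))"
    by (rule card_Num[OF assms(1)]) (use assms(1) in \<open>auto simp: DS_def\<close>)
  also have "\<dots> = (\<Prod>k<t. (if k \<in> S then m else 1))" by (rule prod.cong) (auto simp: DS_def)
  also have "\<dots> = m ^ card {k\<in>{..<t}. k \<in> S}" by (simp add: prod_if_pow)
  also have "{k\<in>{..<t}. k \<in> S} = S" using assms by auto
  finally show ?thesis .
qed



lemma greedy:
  fixes U :: "'a set" and R :: "'a \<Rightarrow> 'a \<Rightarrow> bool" and V :: nat
  assumes "finite U" "\<forall>x\<in>U. R x x" "\<forall>x\<in>U. \<forall>y\<in>U. R x y \<longrightarrow> R y x"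
    "\<forall>x\<in>U. card {y\<in>U. R x y} \<le> V"
  shows "\<exists>F\<subseteq>U. card U \<le> V * card F \<and> (\<forall>x\<in>F. \<forall>y\<in>F. x \<noteq> y \<longrightarrow> \<not> R x y)"
  using assms
proof (induction "card U" arbitrary: U rule: less_induct)
  case less
  show ?case
  proof (cases "U = {}")
    case True then show ?thesis by auto
  next
    case False
    then obtain x where x: "x \<in> U" by blast
    define B where "B = {y\<in>U. R x y}"
    define U' where "U' = U - B"
    have xB: "x \<in> B" using x less.prems(2) by (auto simp: B_def)
    have fU': "finite U'" using less.prems(1) by (auto simp: U'_def)
    have lt: "card U' < card U" using less.prems(1) x xB unfolding U'_def
      by (intro psubset_card_mono) auto
    obtain F' where F': "F' \<subseteq> U'" "card U' \<le> V * card F'" "\<forall>x\<in>F'. \<forall>y\<in>F'. x \<noteq> y \<longrightarrow> \<not> R x y"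
    proof -
      have a: "\<forall>x\<in>U'. R x x" using less.prems(2) by (auto simp: U'_def)
      have b: "\<forall>x\<in>U'. \<forall>y\<in>U'. R x y \<longrightarrow> R y x" using less.prems(3) by (auto simp: U'_def)
      have c: "\<forall>z\<in>U'. card {y\<in>U'. R z y} \<le> V"
      proof
        fix z assume z: "z \<in> U'"
        have "card {y\<in>U'. R z y} \<le> card {y\<in>U. R z y}"
          using less.prems(1) by (intro card_mono) (auto simp: U'_def)
        also have "\<dots> \<le> V" using less.prems(4) z by (auto simp: U'_def)
        finally show "card {y\<in>U'. R z y} \<le> V" .
      qed
      show ?thesis using less.hyps[OF lt fU' a b c] that by blast
    qed
    have xF': "x \<notin> F'" using F'(1) xB by (auto simp: U'_def)
    have fF': "finite F'" using F'(1) fU' finite_subset by blast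
    have "card U = card B + card U'"
    proof -
      have BU: "B \<subseteq> U" by (auto simp: B_def)
      show ?thesis using card_Diff_subset[OF finite_subset[OF BU less.prems(1)] BU] card_mono[OF less.prems(1) BU]
        unfolding U'_def by simp
    qed
    also have "\<dots> \<le> V + V * card F'" using less.prems(4) x F'(2) by (auto simp: B_def)
    also have "\<dots> = V * card (insert x F')" using xF' fF' by simp
    finally have c: "card U \<le> V * card (insert x F')" .
    have "\<forall>a\<in>insert x F'. \<forall>b\<in>insert x F'. a \<noteq> b \<longrightarrow> \<not> R a b"
    proof (intro ballI impI)
      fix a b assume a: "a \<in> insert x F'" and b: "b \<in> insert x F'" and ab: "a \<noteq> b"
      have nx: "\<And>y. y \<in> F' \<Longrightarrow> \<not> R x y \<and> y \<in> U" using F'(1) by (auto simp: U'_def B_def)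
      show "\<not> R a b"
      proof (cases "a = x")
        case True
        then have "b \<in> F'" using b ab by auto
        then show ?thesis using nx True by blast
      next
        case False
        then have aF: "a \<in> F'" using a by auto
        show ?thesis
        proof (cases "b = x")
          case True
          then show ?thesis using nx[OF aF] less.prems(3) x by blast
        next
          case False
          then show ?thesis using F'(3) aF b ab by auto
        qed
      qed
    qed
    moreover have "insert x F' \<subseteq> U" using F'(1) x by (auto simp: U'_def)
    ultimately show ?thesis using c by blast
  qed
qed



lemma card_diff_sym:
  assumes "finite S" "finite T" "card S = card T"
  shows "card (T - S) = card (S - T)"
proof -
  have "card (T - S) = card T - card (T \<inter> S)" using assms by (intro card_Diff_subset_Int) auto
  moreover have "card (S - T) = card S - card (S \<inter> T)" using assms by (intro card_Diff_subset_Int) auto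
  ultimately show ?thesis using assms(3) by (simp add: Int_commute)
qed

lemma ball_bound:
  assumes W: "finite W" and S: "S \<subseteq> W" "card S = n" and cW: "card W = 2*n"
  shows "card {T. (T \<subseteq> W \<and> card T = n) \<and> card (S - T) < d} \<le> (\<Sum>k<d. (n choose k) * (n choose k))"
proof -
  define Fam where "Fam = (\<Union>k\<in>{..<d}. {A. A \<subseteq> S \<and> card A = k} \<times> {B. B \<subseteq> W - S \<and> card B = k})"
  have fS: "finite S" using W S finite_subset by blast
  have cWS: "card (W - S) = n" using cW S W by (simp add: card_Diff_subset fS)
  have sub: "{T. (T \<subseteq> W \<and> card T = n) \<and> card (S - T) < d} \<subseteq> (\<lambda>(A,B). (S - A) \<union> B) ` Fam"
  proof
    fix T assume "T \<in> {T. (T \<subseteq> W \<and> card T = n) \<and> card (S - T) < d}"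
    then have T: "T \<subseteq> W" "card T = n" "card (S - T) < d" by auto
    have fT: "finite T" using T W finite_subset by blast
    have "card (T - S) = card (S - T)" using card_diff_sym[OF fS fT] T S by simp
    then have "(S - T, T - S) \<in> Fam" using T unfolding Fam_def by auto
    moreover have "T = (\<lambda>(A,B). (S - A) \<union> B) (S - T, T - S)" by auto
    ultimately show "T \<in> (\<lambda>(A,B). (S - A) \<union> B) ` Fam" by blast
  qed
  have fFam: "finite Fam" unfolding Fam_def using fS W
    by (intro finite_UN_I finite_cartesian_product) (auto intro: finite_subset)
  have "card {T. (T \<subseteq> W \<and> card T = n) \<and> card (S - T) < d} \<le> card ((\<lambda>(A,B). (S - A) \<union> B) ` Fam)"
    using fFam by (intro card_mono sub) auto
  also have "\<dots> \<le> card Fam" using fFam by (rule card_image_le)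
  also have "\<dots> \<le> (\<Sum>k<d. card ({A. A \<subseteq> S \<and> card A = k} \<times> {B. B \<subseteq> W - S \<and> card B = k}))"
    unfolding Fam_def by (rule card_UN_le) simp
  also have "\<dots> = (\<Sum>k<d. (n choose k) * (n choose k))"
    using fS W S cWS by (intro sum.cong) (auto simp: card_cartesian_product n_subsets)
  finally show ?thesis .
qed

lemma central_binom_lower: "4^n \<le> (2*n+1) * ((2*n) choose n)"
proof -
  have "(4::nat)^n = 2^(2*n)" by (simp add: power_mult)
  also have "\<dots> = (\<Sum>k\<le>2*n. (2*n) choose k)" by (simp add: choose_row_sum)
  also have "\<dots> \<le> (\<Sum>k\<le>2*n. (2*n) choose n)" by (intro sum_mono binomial_maximum')
  also have "\<dots> = (2*n+1) * ((2*n) choose n)" by simp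
  finally show ?thesis .
qed



lemma binom_ratio_real:
  assumes "j < n"
  shows "real (n choose Suc j) * (real j + 1) = real (n choose j) * (real n - real j)"
proof -
  have "Suc j * (n choose Suc j) = n * ((n - 1) choose j)"
    using times_binomial_minus1_eq[of "Suc j" n] by simp
  moreover have "(n - j) * (n choose j) = n * ((n - 1) choose j)" by (rule binomial_absorb_comp)
  ultimately have "Suc j * (n choose Suc j) = (n - j) * (n choose j)" by simp
  then have "real (Suc j * (n choose Suc j)) = real ((n - j) * (n choose j))" by simp
  then show ?thesis using assms by (simp add: of_nat_diff algebra_simps)
qed

lemma key_ineq:
  fixes p q A :: real and n k i :: nat
  assumes p: "0 < p" "p \<le> 1/2" and q: "q = 1 - p" and n: "n \<ge> 1" and k: "real k \<le> real n * p"
    and A: "A = real n * p * q" and j: "k + i < n"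
  shows "(1 - (real i + 1) / A) * ((real (k+i) + 1) * q) \<le> (real n - real (k+i)) * p"
proof (cases "1 - (real i + 1) / A \<le> 0")
  case True
  have "0 \<le> (real n - real (k+i)) * p" using j p by simp
  moreover have "(1 - (real i + 1) / A) * ((real (k+i) + 1) * q) \<le> 0"
    using True q p by (intro mult_nonpos_nonneg) auto
  ultimately show ?thesis by linarith
next
  case False
  have np: "real n * p > 0" using n p by simp
  have qpos: "q > 0" using p q by simp
  have "(1 - (real i + 1) / A) * ((real (k+i) + 1) * q) \<le> (1 - (real i + 1) / A) * ((real n * p + real i + 1) * q)"
    using False k qpos by (intro mult_left_mono mult_right_mono) auto
  also have "\<dots> = (real n * p + real i + 1) * q - (real i + 1) / A * ((real n * p + real i + 1) * q)"
    by (simp add: algebra_simps)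
  also have "(real i + 1) / A * ((real n * p + real i + 1) * q) = (real i + 1) * (real n * p + real i + 1) / (real n * p)"
  proof -
    have "real n \<noteq> 0" "p \<noteq> 0" "q \<noteq> 0" using n p qpos by auto
    then show ?thesis unfolding A by (simp add: field_simps)
  qed
  also have "(real i + 1) * (real n * p + real i + 1) / (real n * p) = (real i + 1) + (real i + 1)^2 / (real n * p)"
  proof -
    have "p * real n \<noteq> 0" using n p by simp
    then show ?thesis by (simp add: field_simps power2_eq_square)
  qed
  also have "(real n * p + real i + 1) * q - ((real i + 1) + (real i + 1)^2 / (real n * p)) = real n * p * q - (real i + 1) * p - (real i + 1)^2 / (real n * p)"
    unfolding q by (simp add: algebra_simps)
  also have "\<dots> \<le> real n * p * q - real i * p"
    using np p by (simp add: algebra_simps)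
  also have "\<dots> = (real n - real n * p - real i) * p" unfolding q by (simp add: algebra_simps)
  also have "\<dots> \<le> (real n - real (k+i)) * p" using k p by (intro mult_right_mono) auto
  finally show ?thesis .
qed

lemma pmf_bound:
  fixes p :: real and n k :: nat
  assumes p: "0 < p" "p \<le> 1/2" and n: "n \<ge> 1" and k: "real k \<le> real n * p"
  shows "(real (n choose k) * p^k * (1-p)^(n-k))^2 \<le> 8 / (real n * p * (1-p))"
proof -
  define q where "q = 1 - p"
  define A where "A = real n * p * q"
  define P where "P j = real (n choose j) * p^j * q^(n-j)" for j
  have qpos: "q > 0" "q \<ge> 1/2" using p by (auto simp: q_def)
  have Apos: "A > 0" using n p qpos by (simp add: A_def)
  have Pnn: "P j \<ge> 0" for j using p qpos by (simp add: P_def)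
  have step: "P (Suc j) * ((real j + 1) * q) = P j * ((real n - real j) * p)" if "j < n" for j
  proof -
    have e: "q^(n-j) = q^(n - Suc j) * q" using that by (metis Suc_diff_Suc power_Suc2)
    have "P (Suc j) * ((real j + 1) * q) = (real (n choose Suc j) * (real j + 1)) * p^Suc j * (q^(n - Suc j) * q)"
      by (simp add: P_def algebra_simps)
    also have "\<dots> = real (n choose j) * (real n - real j) * p^Suc j * q^(n-j)"
      using binom_ratio_real[OF that] e by simp
    also have "\<dots> = P j * ((real n - real j) * p)" by (simp add: P_def algebra_simps)
    finally show ?thesis .
  qed
  have ind: "k + i \<le> n \<Longrightarrow> P (k + i) \<ge> P k * (1 - real i ^ 2 / A)" for i
  proof (induction i)
    case 0 then show ?case by simp
  next
    case (Suc i)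
    have j: "k + i < n" using Suc.prems by simp
    have IH: "P (k+i) \<ge> P k * (1 - real i ^ 2 / A)" using Suc.IH Suc.prems by simp
    have jq: "(real (k+i) + 1) * q > 0" using qpos by simp
    have r: "P (Suc (k+i)) \<ge> P (k+i) * (1 - (real i + 1) / A)"
    proof -
      have "P (k+i) * (1 - (real i + 1) / A) * ((real (k+i) + 1) * q) \<le> P (k+i) * ((real n - real (k+i)) * p)"
        using key_ineq[OF p q_def n k A_def j] Pnn[of "k+i"] by (simp add: mult.assoc mult_left_mono)
      also have "\<dots> = P (Suc (k+i)) * ((real (k+i) + 1) * q)" using step[OF j] by simp
      finally show ?thesis using jq by (simp add: mult_le_cancel_right)
    qed
    show ?case
    proof (cases "1 - real i ^ 2 / A \<ge> 0 \<and> 1 - (real i + 1) / A \<ge> 0")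
      case True
      have "P k * (1 - real (Suc i) ^ 2 / A) \<le> P k * ((1 - real i ^ 2 / A) * (1 - (real i + 1) / A))"
      proof (intro mult_left_mono Pnn)
        have "(1 - real i ^ 2 / A) * (1 - (real i + 1) / A) = 1 - (real i^2 + real i + 1)/A + real i^2 * (real i + 1)/A^2"
          using Apos by (simp add: field_simps power2_eq_square)
        also have "\<dots> \<ge> 1 - (real i^2 + real i + 1)/A" using Apos by simp
        moreover have "1 - real (Suc i) ^ 2 / A \<le> 1 - (real i^2 + real i + 1)/A"
          using Apos by (simp add: divide_right_mono power2_eq_square algebra_simps)
        ultimately show "1 - real (Suc i) ^ 2 / A \<le> (1 - real i ^ 2 / A) * (1 - (real i + 1) / A)" by linarith
      qed
      also have "\<dots> = (P k * (1 - real i ^ 2 / A)) * (1 - (real i + 1) / A)" by simp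
      also have "\<dots> \<le> P (k+i) * (1 - (real i + 1) / A)" using IH True by (intro mult_right_mono) auto
      also have "\<dots> \<le> P (k + Suc i)" using r by simp
      finally show ?thesis .
    next
      case False
      have "1 - real (Suc i) ^ 2 / A < 0"
      proof -
        have a: "real i ^ 2 \<le> real (Suc i) ^ 2" by (simp add: power_mono)
        have b: "real i + 1 \<le> real (Suc i) ^ 2"
          using mult_right_mono[of 1 "real i + 1" "real i + 1"] by (simp add: power2_eq_square algebra_simps)
        have "real i ^ 2 / A \<le> real (Suc i) ^ 2 / A" using a Apos by (simp add: divide_right_mono)
        moreover have "(real i + 1) / A \<le> real (Suc i) ^ 2 / A" using b Apos by (simp add: divide_right_mono)
        ultimately show ?thesis using False by linarith
      qed
      then have "P k * (1 - real (Suc i) ^ 2 / A) \<le> 0" using Pnn by (simp add: mult_nonneg_nonpos)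
      then show ?thesis using Pnn[of "k + Suc i"] by linarith
    qed
  qed
  define L where "L = nat \<lfloor>sqrt (A/2)\<rfloor>"
  have L1: "real L \<le> sqrt (A/2)" using Apos by (simp add: L_def)
  have L2: "sqrt (A/2) < real L + 1" using Apos by (simp add: L_def)
  have LL: "real L ^ 2 \<le> A / 2"
  proof -
    have "real L ^ 2 \<le> sqrt (A/2) ^ 2" using L1 by (intro power_mono) auto
    then show ?thesis using Apos by simp
  qed
  have LL2: "A / 2 < (real L + 1) ^ 2"
  proof -
    have "sqrt (A/2) ^ 2 < (real L + 1) ^ 2" using L2 Apos by (intro power_strict_mono) auto
    then show ?thesis using Apos by simp
  qed
  have kL: "k + L \<le> n"
  proof -
    have "A / 2 \<le> (real n * q)^2"
    proof -
      have "A / 2 = real n * q * (p / 2)" by (simp add: A_def)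
      also have "\<dots> \<le> real n * q * (real n * q)"
      proof (intro mult_left_mono)
        have "1 * (1/2) \<le> real n * q" using n qpos by (intro mult_mono) auto
        then show "p / 2 \<le> real n * q" using p by simp
      qed (use qpos in auto)
      finally show ?thesis by (simp add: power2_eq_square)
    qed
    then have "sqrt (A/2) \<le> real n * q" using qpos by (simp add: real_sqrt_le_iff real_le_lsqrt)
    then have "real k + real L \<le> real n" using k L1 by (simp add: q_def algebra_simps)
    then show ?thesis by linarith
  qed
  have half: "P (k + i) \<ge> P k / 2" if "i \<le> L" for i
  proof -
    have "real i ^ 2 \<le> real L ^ 2" using that by (simp add: power_mono)
    then have "real i ^ 2 \<le> A / 2" using LL by linarith
    then have "real i ^ 2 / A \<le> 1/2" using Apos by (simp add: field_simps)
    then have "1/2 \<le> 1 - real i ^ 2 / A" by linarith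
    then have "P k * (1/2) \<le> P k * (1 - real i ^ 2 / A)" using Pnn[of k] by (rule mult_left_mono)
    then have "P k / 2 \<le> P k * (1 - real i ^ 2 / A)" by simp
    also have "\<dots> \<le> P (k + i)" using ind that kL by simp
    finally show ?thesis .
  qed
  have "(real L + 1) * (P k / 2) = (\<Sum>i\<le>L. P k / 2)" by simp
  also have "\<dots> \<le> (\<Sum>i\<le>L. P (k + i))" by (intro sum_mono half) auto
  also have "\<dots> = (\<Sum>j\<in>(\<lambda>i. k + i) ` {..L}. P j)" by (simp add: sum.reindex)
  also have "\<dots> \<le> (\<Sum>j\<le>n. P j)" using kL Pnn by (intro sum_mono2) auto
  also have "\<dots> = (p + q)^n" by (simp add: P_def binomial_ring)
  also have "\<dots> = 1" by (simp add: q_def)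
  finally have "(real L + 1) * P k \<le> 2" by simp
  then have Pk: "P k \<le> 2 / (real L + 1)" by (simp add: field_simps)
  have "P k ^ 2 \<le> (2 / (real L + 1))^2" using Pk Pnn by (intro power_mono) auto
  also have "\<dots> = 4 / (real L + 1)^2" by (simp add: power_divide)
  also have "\<dots> \<le> 4 / (A/2)" using LL2 Apos by (intro divide_left_mono) auto
  also have "\<dots> = 8 / A" by simp
  finally show ?thesis by (simp add: P_def A_def q_def)
qed



lemma entropy_identity:
  fixes \<delta> :: real and n :: nat
  assumes "0 < \<delta>" "\<delta> < 1/2"
  shows "(1/(1-\<delta>))^(2*n) * ((1-\<delta>)/\<delta>) powr (2*\<delta>*n) = 2 powr (2*n*bin_entropy \<delta>)"
proof -
  define q where "q = 1 - \<delta>"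
  have q: "q > 0" using assms by (simp add: q_def)
  have h: "bin_entropy \<delta> * ln 2 = - \<delta> * ln \<delta> - q * ln q"
    using assms by (simp add: bin_entropy_def q_def log_def field_simps)
  have "(1/q)^(2*n) = exp (real (2*n) * ln (1/q))" using q by (simp add: powr_realpow[symmetric] powr_def del: of_nat_mult)
  moreover have "(q/\<delta>) powr (2*\<delta>*n) = exp ((2*\<delta>*n) * ln (q/\<delta>))" using q assms by (simp add: powr_def)
  moreover have "2 powr (2*n*bin_entropy \<delta>) = exp ((2*n*bin_entropy \<delta>) * ln 2)" by (simp add: powr_def)
  moreover have "real (2*n) * ln (1/q) + (2*\<delta>*n) * ln (q/\<delta>) = (2*n*bin_entropy \<delta>) * ln 2"
  proof -
    have "ln (1/q) = - ln q" using q by (simp add: ln_div)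
    moreover have "ln (q/\<delta>) = ln q - ln \<delta>" using q assms by (simp add: ln_div)
    ultimately have "real (2*n) * ln (1/q) + (2*\<delta>*n) * ln (q/\<delta>) = real (2*n) * (- ln q) + (2*\<delta>*n) * (ln q - ln \<delta>)"
      by simp
    also have "\<dots> = 2*n*(- \<delta> * ln \<delta> - q * ln q)" by (simp add: q_def algebra_simps)
    also have "\<dots> = (2*n*bin_entropy \<delta>) * ln 2" using h by simp
    finally show ?thesis .
  qed
  ultimately show ?thesis unfolding q_def by (simp add: exp_add[symmetric])
qed

lemma V_bound:
  fixes \<delta> :: real and n d :: nat
  assumes d0: "0 < \<delta>" "\<delta> < 1/2" and n: "n \<ge> 1" and d: "real d \<le> \<delta> * n + 1"
  shows "real (\<Sum>k<d. (n choose k) * (n choose k)) \<le>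
    (8 / (real n * \<delta> * (1-\<delta>))) * (((1-\<delta>)/\<delta>)^2 / (((1-\<delta>)/\<delta>)^2 - 1)) *
    ((1/(1-\<delta>))^(2*n) * ((1-\<delta>)/\<delta>) powr (2*\<delta>*n))"
proof -
  define q where "q = 1 - \<delta>"
  define \<rho> where "\<rho> = q / \<delta>"
  define K where "K = 8 / (real n * \<delta> * q)"
  have q: "q > 0" "q > \<delta>" using d0 by (auto simp: q_def)
  have \<rho>1: "\<rho> > 1" using q d0 by (simp add: \<rho>_def)
  have Kpos: "K > 0" using n d0 q by (simp add: K_def)
  have each: "real ((n choose k) * (n choose k)) \<le> K * ((1/q)^(2*n) * (\<rho>^2)^k)" if k: "k < d" for k
  proof -
    have kd: "real k \<le> real n * \<delta>" using k d by (simp add: algebra_simps)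
    have kn: "k \<le> n"
    proof -
      have "real n * \<delta> \<le> real n" using d0 by (simp add: mult_left_le)
      then show ?thesis using kd by linarith
    qed
    have pb: "(real (n choose k) * \<delta>^k * q^(n-k))^2 \<le> K"
      using pmf_bound[of \<delta> n k] d0 n kd by (simp add: K_def q_def)
    have w: "\<delta>^k * q^(n-k) * \<rho>^k = q^n"
    proof -
      have "\<delta>^k * \<rho>^k = q^k" using d0 by (simp add: \<rho>_def power_divide)
      then have "\<delta>^k * q^(n-k) * \<rho>^k = q^k * q^(n-k)" by (simp add: algebra_simps)
      also have "\<dots> = q^n" using kn by (simp add: power_add[symmetric])
      finally show ?thesis .
    qed
    have wpos: "\<delta>^k * q^(n-k) > 0" using d0 q by simp
    have "real ((n choose k) * (n choose k)) = (real (n choose k) * \<delta>^k * q^(n-k))^2 * ((1/q)^(2*n) * (\<rho>^2)^k)"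
    proof -
      have a1: "(\<rho>^2)^k = (\<rho>^k)^2" by (simp add: power_mult[symmetric] mult.commute)
      have a2: "(1/q)^(2*n) = ((1/q)^n)^2" by (simp add: power_mult[symmetric] mult.commute)
      have "(\<delta>^k * q^(n-k))^2 * ((1/q)^(2*n) * (\<rho>^2)^k) = ((\<delta>^k * q^(n-k) * \<rho>^k) * (1/q)^n)^2"
        unfolding a1 a2 by (simp add: power_mult_distrib)
      also have "\<dots> = ((\<delta>^k * q^(n-k) * \<rho>^k) / q^n)^2" by (simp add: power_divide)
      also have "\<dots> = 1" using w q by simp
      finally have "(\<delta>^k * q^(n-k))^2 * ((1/q)^(2*n) * (\<rho>^2)^k) = 1" .
      then show ?thesis by (simp add: power2_eq_square algebra_simps)
    qed
    also have "\<dots> \<le> K * ((1/q)^(2*n) * (\<rho>^2)^k)" using pb q by (intro mult_right_mono) auto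
    finally show ?thesis .
  qed
  have "real (\<Sum>k<d. (n choose k) * (n choose k)) = (\<Sum>k<d. real ((n choose k) * (n choose k)))" by simp
  also have "\<dots> \<le> (\<Sum>k<d. K * ((1/q)^(2*n) * (\<rho>^2)^k))" by (intro sum_mono each) auto
  also have "\<dots> = K * (1/q)^(2*n) * (\<Sum>k<d. (\<rho>^2)^k)" by (simp add: sum_distrib_left mult.assoc)
  also have "(\<Sum>k<d. (\<rho>^2)^k) \<le> \<rho>^2 / (\<rho>^2 - 1) * \<rho> powr (2*\<delta>*n)"
  proof -
    have r2: "\<rho>^2 > 1" using \<rho>1 by (simp add: one_less_power)
    have "(\<Sum>k<d. (\<rho>^2)^k) = ((\<rho>^2)^d - 1) / (\<rho>^2 - 1)"
      using r2 sum_gp_strict[of "\<rho>^2" d] by (simp add: field_simps)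
    also have "\<dots> \<le> (\<rho>^2)^d / (\<rho>^2 - 1)" using r2 by (intro divide_right_mono) auto
    finally have calc: "(\<Sum>k<d. (\<rho>^2)^k) \<le> (\<rho>^2)^d / (\<rho>^2 - 1)" .
    have "(\<rho>^2)^d = \<rho> powr (2 * real d)"
    proof -
      have "(\<rho>^2)^d = \<rho>^(2*d)" by (simp only: power_mult)
      also have "\<dots> = \<rho> powr (real (2*d))" using \<rho>1 by (subst powr_realpow) auto
      finally show ?thesis by simp
    qed
    also have "\<dots> \<le> \<rho> powr (2*\<delta>*n + 2)" using \<rho>1 d by (intro powr_mono) auto
    also have "\<dots> = \<rho>^2 * \<rho> powr (2*\<delta>*n)" using \<rho>1 by (simp add: powr_add powr_realpow)
    finally have pw: "(\<rho>^2)^d \<le> \<rho>^2 * \<rho> powr (2*\<delta>*n)" .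
    have "(\<rho>^2)^d / (\<rho>^2 - 1) \<le> \<rho>^2 * \<rho> powr (2*\<delta>*n) / (\<rho>^2 - 1)"
      using pw r2 by (intro divide_right_mono) auto
    with calc show ?thesis by (simp add: times_divide_eq_left)
  qed
  then have "K * (1/q)^(2*n) * (\<Sum>k<d. (\<rho>^2)^k) \<le> K * (1/q)^(2*n) * (\<rho>^2 / (\<rho>^2 - 1) * \<rho> powr (2*\<delta>*n))"
    using Kpos q by (intro mult_left_mono) auto
  also have "K * (1/q)^(2*n) * (\<rho>^2 / (\<rho>^2 - 1) * \<rho> powr (2*\<delta>*n)) = K * (\<rho>^2 / (\<rho>^2 - 1)) * ((1/q)^(2*n) * \<rho> powr (2*\<delta>*n))"
    by (simp only: ac_simps)
  finally show ?thesis unfolding K_def \<rho>_def q_def .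

qed



lemma card_ET:
  assumes "m \<ge> 2" "T \<subseteq> {0..<t}"
  shows "card (Num m t (ET m T)) = m ^ (t - card T)"
proof -
  have "card (Num m t (ET m T)) = (\<Prod>k<t. card (ET m T k))"
    by (rule card_Num[OF assms(1)]) (use assms(1) in \<open>auto simp: ET_def\<close>)
  also have "\<dots> = (\<Prod>k<t. (if k \<notin> T then m else 1))" by (rule prod.cong) (auto simp: ET_def)
  also have "\<dots> = m ^ card {k\<in>{..<t}. k \<notin> T}" by (simp add: prod_if_pow)
  also have "{k\<in>{..<t}. k \<notin> T} = {..<t} - T" by auto
  also have "card ({..<t} - T) = t - card T"
    using assms by (subst card_Diff_subset) (auto intro: finite_subset)
  finally show ?thesis .
qed

lemma sumset_int: "sumset (int ` A) (int ` B) = int ` ns A B"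
  unfolding sumset_def ns_def by force

lemma card_sumset_int: "card (sumset (int ` A) (int ` B)) = card (ns A B)"
  unfolding sumset_int by (rule card_image) (simp add: inj_on_def)

lemma real_cross:
  fixes \<delta> :: real and m n a :: nat
  assumes m: "m \<ge> 2" and a: "\<delta> * n \<le> real a" "a \<le> 2*n"
  shows "real (2 ^ a * m ^ (2*n - a)) \<le> 2 powr (\<delta> * real (2*n) / 2) * real m powr ((1 - \<delta>/2) * real (2*n))"
proof -
  have mpos: "real m > 0" using m by simp
  have "real (2 ^ a * m ^ (2*n - a)) = real m ^ (2*n) * (2 / real m) ^ a"
  proof -
    have "real m ^ (2*n) = real m ^ a * real m ^ (2*n - a)" using a by (simp add: power_add[symmetric])
    then show ?thesis using mpos by (simp add: power_divide field_simps)
  qed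
  also have "(2 / real m) ^ a = (2 / real m) powr (real a)" using mpos by (simp add: powr_realpow)
  also have "\<dots> \<le> (2 / real m) powr (\<delta> * n)" using m a by (intro powr_mono') auto
  also have "(2 / real m) powr (\<delta> * n) = 2 powr (\<delta> * n) / real m powr (\<delta> * n)" by (simp add: powr_divide)
  finally have "real (2 ^ a * m ^ (2*n - a)) \<le> real m ^ (2*n) * (2 powr (\<delta> * n) / real m powr (\<delta> * n))"
    using mpos by (simp add: mult_left_mono)
  also have "\<dots> = 2 powr (\<delta> * n) * (real m powr (real (2*n)) / real m powr (\<delta> * n))"
    using powr_realpow[OF mpos, of "2*n"] by simp
  also have "\<dots> = 2 powr (\<delta> * n) * real m powr (real (2*n) - \<delta> * n)" by (simp add: powr_diff)
  also have "\<dots> = 2 powr (\<delta> * real (2*n) / 2) * real m powr ((1 - \<delta>/2) * real (2*n))"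
    by (simp add: algebra_simps)
  finally show ?thesis .
qed



lemma construct:
  fixes \<delta> :: real and m n t g :: nat and h :: "nat \<Rightarrow> nat set"
  assumes m: "m \<ge> 2" and t: "t = 2*n"
    and hU: "\<forall>i\<in>{1..g}. h i \<subseteq> {0..<t} \<and> card (h i) = n"
    and sep: "\<forall>i\<in>{1..g}. \<forall>j\<in>{1..g}. i \<noteq> j \<longrightarrow> \<delta> * n \<le> real (card (h i - h j))"
  shows "\<exists>(X :: nat \<Rightarrow> int set) (Y :: nat \<Rightarrow> int set).
          (\<forall>i\<in>{1..g}. X i \<subseteq> {0..(int m)^t} \<and> Y i \<subseteq> {0..(int m)^t}) \<and>
          (\<forall>i\<in>{1..g}. real (card (X i)) = sqrt (real_of_int ((int m)^t)) \<and>
                         real (card (Y i)) = sqrt (real_of_int ((int m)^t))) \<and>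
          (\<forall>i\<in>{1..g}. int (card (sumset (X i) (Y i))) = (int m)^t) \<and>
          (\<forall>i\<in>{1..g}. \<forall>j\<in>{1..g}. i \<noteq> j \<longrightarrow>
              real (card (sumset (X i) (Y j))) \<le> 2 powr (\<delta> * real t / 2) * real m powr ((1 - \<delta> / 2) * real t))"
proof -
  define X where "X i = int ` Num m t (DS m (h i))" for i
  define Y where "Y i = int ` Num m t (ET m (h i))" for i
  have sq: "sqrt (real_of_int ((int m)^t)) = real (m ^ n)"
  proof -
    have "real_of_int ((int m)^t) = (real m ^ n)^2" by (simp add: t power_mult[symmetric] mult.commute)
    then show ?thesis by simp
  qed
  have c1: "\<forall>i\<in>{1..g}. X i \<subseteq> {0..(int m)^t} \<and> Y i \<subseteq> {0..(int m)^t}"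
  proof -
    have "\<And>x. x < m^t \<Longrightarrow> int x \<in> {0..(int m)^t}"
      by (simp add: of_nat_less_iff[symmetric] less_imp_le)
    then show ?thesis by (auto simp: X_def Y_def Num_def)
  qed
  have c2: "\<forall>i\<in>{1..g}. real (card (X i)) = sqrt (real_of_int ((int m)^t)) \<and> real (card (Y i)) = sqrt (real_of_int ((int m)^t))"
  proof
    fix i assume i: "i \<in> {1..g}"
    have "card (X i) = m ^ n" using card_DS[OF m, of "h i" t] hU i
      by (simp add: X_def card_image inj_on_def)
    moreover have "card (Y i) = m ^ n" using card_ET[OF m, of "h i" t] hU i
      by (simp add: Y_def card_image inj_on_def t)
    ultimately show "real (card (X i)) = sqrt (real_of_int ((int m)^t)) \<and> real (card (Y i)) = sqrt (real_of_int ((int m)^t))"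
      using sq by simp
  qed
  have c3: "\<forall>i\<in>{1..g}. int (card (sumset (X i) (Y i))) = (int m)^t"
  proof
    fix i assume i: "i \<in> {1..g}"
    show "int (card (sumset (X i) (Y i))) = (int m)^t"
      using card_diag[OF m, of "h i" t] hU i by (simp add: X_def Y_def card_sumset_int)
  qed
  have c4: "\<forall>i\<in>{1..g}. \<forall>j\<in>{1..g}. i \<noteq> j \<longrightarrow>
              real (card (sumset (X i) (Y j))) \<le> 2 powr (\<delta> * real t / 2) * real m powr ((1 - \<delta> / 2) * real t)"
  proof (intro ballI impI)
    fix i j assume i: "i \<in> {1..g}" and j: "j \<in> {1..g}" and ij: "i \<noteq> j"
    have hi: "h i \<subseteq> {0..<t}" "card (h i) = n" and hj: "h j \<subseteq> {0..<t}" "card (h j) = n" using hU i j by auto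
    have fi: "finite (h i)" and fj: "finite (h j)" using hi hj finite_subset by auto
    define a where "a = card (h i - h j)"
    have ta: "card (h j - h i) = a" unfolding a_def using card_diff_sym[OF fi fj] hi hj by simp
    have an: "a \<le> 2*n" unfolding a_def using card_mono[OF fi, of "h i - h j"] hi by auto
    have "card (sumset (X i) (Y j)) \<le> 2 ^ a * m ^ (t - a)"
      using card_cross[OF m hi(1) hj(1)] ta by (simp add: X_def Y_def card_sumset_int a_def)
    then have "real (card (sumset (X i) (Y j))) \<le> real (2 ^ a * m ^ (2*n - a))" unfolding t by linarith
    also have "\<dots> \<le> 2 powr (\<delta> * real (2*n) / 2) * real m powr ((1 - \<delta>/2) * real (2*n))"
      using real_cross[OF m _ an, of \<delta>] sep i j ij by (simp add: a_def)
    finally show "real (card (sumset (X i) (Y j))) \<le> 2 powr (\<delta> * real t / 2) * real m powr ((1 - \<delta> / 2) * real t)"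
      by (simp add: t)
  qed
  show ?thesis using c1 c2 c3 c4 by blast
qed



theorem mainTheorem3:
  fixes \<delta> :: real
  assumes "0 \<le> \<delta>" and "\<delta> < 1/2"
  shows "\<exists>c > 0. \<forall>(m::nat) (t::nat). m \<ge> 2 \<longrightarrow> t \<ge> 2 \<longrightarrow> even t \<longrightarrow>
    (let \<sigma> = (int m) ^ t;
         \<alpha> = 2 powr (\<delta> * real t / 2) * real m powr ((1 - \<delta> / 2) * real t)
     in \<exists>(g::nat) (X :: nat \<Rightarrow> int set) (Y :: nat \<Rightarrow> int set).
          real g \<ge> c * 2 powr ((1 - bin_entropy \<delta>) * real t) \<and>
          (\<forall>i\<in>{1..g}. X i \<subseteq> {0..\<sigma>} \<and> Y i \<subseteq> {0..\<sigma>}) \<and>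
          (\<forall>i\<in>{1..g}. real (card (X i)) = sqrt (real_of_int \<sigma>) \<and>
                         real (card (Y i)) = sqrt (real_of_int \<sigma>)) \<and>
          (\<forall>i\<in>{1..g}. int (card (sumset (X i) (Y i))) = \<sigma>) \<and>
          (\<forall>i\<in>{1..g}. \<forall>j\<in>{1..g}. i \<noteq> j \<longrightarrow>
              real (card (sumset (X i) (Y j))) \<le> \<alpha>))"
proof (cases "\<delta> = 0")
  case True
  show ?thesis
  proof (intro exI[of _ 1] conjI allI impI)
    fix m t :: nat assume m: "m \<ge> 2" and t2: "t \<ge> 2" and ev: "even t"
    obtain n where t: "t = 2*n" using ev by blast
    define g :: nat where "g = 2^t"
    obtain X Y where XY: "(\<forall>i\<in>{1..g}. X i \<subseteq> {0..(int m)^t} \<and> Y i \<subseteq> {0..(int m)^t}) \<and>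
          (\<forall>i\<in>{1..g}. real (card (X i)) = sqrt (real_of_int ((int m)^t)) \<and>
                         real (card (Y i)) = sqrt (real_of_int ((int m)^t))) \<and>
          (\<forall>i\<in>{1..g}. int (card (sumset (X i) (Y i))) = (int m)^t) \<and>
          (\<forall>i\<in>{1..g}. \<forall>j\<in>{1..g}. i \<noteq> j \<longrightarrow>
              real (card (sumset (X i) (Y j))) \<le> 2 powr (\<delta> * real t / 2) * real m powr ((1 - \<delta> / 2) * real t))"
    proof -
      have hU: "\<forall>i\<in>{1..g}. (\<lambda>_. {0..<n}) i \<subseteq> {0..<t} \<and> card ((\<lambda>_. {0..<n::nat}) i) = n" using t by auto
      have sep: "\<forall>i\<in>{1..g}. \<forall>j\<in>{1..g}. i \<noteq> j \<longrightarrow> \<delta> * n \<le> real (card ((\<lambda>_. {0..<n::nat}) i - (\<lambda>_. {0..<n}) j))"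
        using True by simp
      show ?thesis using construct[OF m t hU sep] by (elim exE) (rule that)
    qed
    have gb0: "real g \<ge> 1 * 2 powr ((1 - bin_entropy \<delta>) * real t)"
      using True by (simp add: g_def bin_entropy_def powr_realpow)
    show "let \<sigma> = (int m) ^ t;
         \<alpha> = 2 powr (\<delta> * real t / 2) * real m powr ((1 - \<delta> / 2) * real t)
     in \<exists>(g::nat) (X :: nat \<Rightarrow> int set) (Y :: nat \<Rightarrow> int set).
          real g \<ge> 1 * 2 powr ((1 - bin_entropy \<delta>) * real t) \<and>
          (\<forall>i\<in>{1..g}. X i \<subseteq> {0..\<sigma>} \<and> Y i \<subseteq> {0..\<sigma>}) \<and>
          (\<forall>i\<in>{1..g}. real (card (X i)) = sqrt (real_of_int \<sigma>) \<and>
                         real (card (Y i)) = sqrt (real_of_int \<sigma>)) \<and>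
          (\<forall>i\<in>{1..g}. int (card (sumset (X i) (Y i))) = \<sigma>) \<and>
          (\<forall>i\<in>{1..g}. \<forall>j\<in>{1..g}. i \<noteq> j \<longrightarrow>
              real (card (sumset (X i) (Y j))) \<le> \<alpha>)"
      unfolding Let_def apply (rule exI[of _ g], rule exI[of _ X], rule exI[of _ Y])
      by (rule conjI[OF gb0 XY])
  qed simp
next
  case False
  then have d0: "0 < \<delta>" "\<delta> < 1/2" using assms by auto
  define q where "q = 1 - \<delta>"
  define \<rho> where "\<rho> = q / \<delta>"
  define K0 where "K0 = 8 / (\<delta> * q) * (\<rho>^2 / (\<rho>^2 - 1))"
  have qpos: "q > 0" "q > \<delta>" using d0 by (auto simp: q_def)
  have \<rho>1: "\<rho> > 1" using qpos d0 by (simp add: \<rho>_def)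
  have r2: "\<rho>^2 > 1" using \<rho>1 by (simp add: one_less_power)
  have K0pos: "K0 > 0" unfolding K0_def using d0 qpos r2 by (intro mult_pos_pos divide_pos_pos) auto
  show ?thesis
  proof (intro exI[of _ "1 / (3 * K0)"] conjI allI impI)
    show "1 / (3 * K0) > 0" using K0pos by simp
    fix m t :: nat assume m: "m \<ge> 2" and t2: "t \<ge> 2" and ev: "even t"
    obtain n where t: "t = 2*n" using ev by blast
    have n1: "n \<ge> 1" using t2 t by simp
    define d where "d = nat \<lceil>\<delta> * n\<rceil>"
    have dpos: "d \<ge> 1"
    proof -
      have "\<delta> * n > 0" using d0 n1 by simp
      then have c: "\<lceil>\<delta> * n\<rceil> \<ge> 1" using le_ceiling_iff[of 1 "\<delta> * n"] by simp
      show ?thesis using nat_mono[OF c] unfolding d_def by linarith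
    qed
    have dlo: "\<delta> * n \<le> real d" by (simp add: d_def) linarith
    have dhi: "real d \<le> \<delta> * n + 1" using d0 n1 by (simp add: d_def)
    define W where "W = {0..<t}"
    define U where "U = {T. T \<subseteq> W \<and> card T = n}"
    define V where "V = (\<Sum>k<d. (n choose k) * (n choose k))"
    define R where "R S T = (card (S - T) < d)" for S T :: "nat set"
    have fW: "finite W" "card W = 2*n" by (auto simp: W_def t)
    have fU: "finite U" by (rule finite_subset[of _ "Pow W"]) (auto simp: U_def fW)
    have Rrefl: "\<forall>x\<in>U. R x x" using dpos by (simp add: R_def)
    have Rsym: "\<forall>x\<in>U. \<forall>y\<in>U. R x y \<longrightarrow> R y x"
    proof (intro ballI impI)
      fix x y assume x: "x \<in> U" and y: "y \<in> U" and r: "R x y"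
      have "finite x" "finite y" using finite_subset[of x W] finite_subset[of y W] x y fW by (auto simp: U_def)
      then show "R y x" using card_diff_sym[of x y] x y r by (simp add: U_def R_def)
    qed
    have Rball: "\<forall>x\<in>U. card {y\<in>U. R x y} \<le> V"
    proof
      fix x assume x: "x \<in> U"
      have "{y\<in>U. R x y} = {T. (T \<subseteq> W \<and> card T = n) \<and> card (x - T) < d}" by (auto simp: U_def R_def)
      then show "card {y\<in>U. R x y} \<le> V" using ball_bound[OF fW(1) _ _ fW(2), of x d] x
        by (simp add: U_def V_def)
    qed
    obtain F where F: "F \<subseteq> U" "card U \<le> V * card F" "\<forall>x\<in>F. \<forall>y\<in>F. x \<noteq> y \<longrightarrow> \<not> R x y"
      using greedy[OF fU Rrefl Rsym Rball] by blast
    have fF: "finite F" using F(1) fU finite_subset by blast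
    obtain hh where hh: "bij_betw hh {1..card F} F" using ex_bij_betw_nat_finite_1[OF fF] by blast
    define g where "g = card F"
    have hU: "\<forall>i\<in>{1..g}. hh i \<subseteq> {0..<t} \<and> card (hh i) = n"
      using hh F(1) unfolding bij_betw_def g_def U_def W_def by auto
    have sep: "\<forall>i\<in>{1..g}. \<forall>j\<in>{1..g}. i \<noteq> j \<longrightarrow> \<delta> * n \<le> real (card (hh i - hh j))"
    proof (intro ballI impI)
      fix i j assume i: "i \<in> {1..g}" and j: "j \<in> {1..g}" and ij: "i \<noteq> j"
      have "hh i \<noteq> hh j" using hh i j ij unfolding bij_betw_def inj_on_def g_def by blast
      moreover have "hh i \<in> F" "hh j \<in> F" using hh i j unfolding bij_betw_def g_def by auto
      ultimately have "\<not> card (hh i - hh j) < d" using F(3) by (auto simp: R_def)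
      then show "\<delta> * n \<le> real (card (hh i - hh j))" using dlo by linarith
    qed
    obtain X Y where XY: "(\<forall>i\<in>{1..g}. X i \<subseteq> {0..(int m)^t} \<and> Y i \<subseteq> {0..(int m)^t}) \<and>
          (\<forall>i\<in>{1..g}. real (card (X i)) = sqrt (real_of_int ((int m)^t)) \<and>
                         real (card (Y i)) = sqrt (real_of_int ((int m)^t))) \<and>
          (\<forall>i\<in>{1..g}. int (card (sumset (X i) (Y i))) = (int m)^t) \<and>
          (\<forall>i\<in>{1..g}. \<forall>j\<in>{1..g}. i \<noteq> j \<longrightarrow>
              real (card (sumset (X i) (Y j))) \<le> 2 powr (\<delta> * real t / 2) * real m powr ((1 - \<delta> / 2) * real t))"
      using construct[OF m t hU sep] by (elim exE) (rule that)
    define E where "E = 2 powr (2*n*bin_entropy \<delta>)"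
    have Epos: "E > 0" by (simp add: E_def)
    have cU: "card U = (2*n) choose n" unfolding U_def using n_subsets[OF fW(1), of n] fW(2) by simp
    have Vb: "real V \<le> K0 / n * E"
    proof -
      have "real V \<le> (8 / (real n * \<delta> * (1-\<delta>))) * (((1-\<delta>)/\<delta>)^2 / (((1-\<delta>)/\<delta>)^2 - 1)) *
          ((1/(1-\<delta>))^(2*n) * ((1-\<delta>)/\<delta>) powr (2*\<delta>*n))"
        unfolding V_def by (rule V_bound[OF d0 n1 dhi])
      also have "(1/(1-\<delta>))^(2*n) * ((1-\<delta>)/\<delta>) powr (2*\<delta>*n) = E"
        unfolding E_def by (rule entropy_identity[OF d0])
      also have "(8 / (real n * \<delta> * (1-\<delta>))) * (((1-\<delta>)/\<delta>)^2 / (((1-\<delta>)/\<delta>)^2 - 1)) = K0 / n"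
        by (simp add: K0_def \<rho>_def q_def)
      finally show ?thesis .
    qed
    have "(4::real)^n \<le> real ((2*n+1) * ((2*n) choose n))"
      using central_binom_lower[of n] by (metis of_nat_le_iff of_nat_numeral of_nat_power)
    also have "\<dots> \<le> real ((2*n+1) * (V * g))"
    proof -
      have "(2*n+1)*((2*n) choose n) \<le> (2*n+1)*(V*g)" using F(2) cU unfolding g_def by (intro mult_le_mono2) simp
      then show ?thesis by (simp only: of_nat_le_iff)
    qed
    also have "\<dots> = real (2*n+1) * real V * real g" by (simp add: algebra_simps)
    also have "\<dots> \<le> real (2*n+1) * (K0 / n * E) * real g"
      by (intro mult_right_mono mult_left_mono Vb) auto
    also have "\<dots> \<le> (3 * n) * (K0 / n * E) * real g"
      using n1 K0pos Epos by (intro mult_right_mono) auto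
    also have "\<dots> = 3 * K0 * E * real g" using n1 by simp
    finally have main: "(4::real)^n \<le> 3 * K0 * E * real g" .
    have "1 / (3 * K0) * 2 powr ((1 - bin_entropy \<delta>) * real t) = (4::real)^n / E / (3 * K0)"
    proof -
      have "2 powr ((1 - bin_entropy \<delta>) * real t) = 2 powr (real (2*n)) / E"
        unfolding E_def t by (simp add: powr_diff[symmetric] algebra_simps)
      also have "2 powr (real (2*n)) = (4::real)^n"
      proof -
        have "2 powr (real (2*n)) = (2::real)^(2*n)" by (rule powr_realpow) simp
        also have "\<dots> = 4^n" by (simp add: power_mult)
        finally show ?thesis .
      qed
      finally show ?thesis by simp
    qed
    also have "\<dots> \<le> real g" using main K0pos Epos by (simp add: field_simps)
    finally have gb: "real g \<ge> 1 / (3 * K0) * 2 powr ((1 - bin_entropy \<delta>) * real t)" .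
    show "let \<sigma> = (int m) ^ t;
         \<alpha> = 2 powr (\<delta> * real t / 2) * real m powr ((1 - \<delta> / 2) * real t)
     in \<exists>(g::nat) (X :: nat \<Rightarrow> int set) (Y :: nat \<Rightarrow> int set).
          real g \<ge> 1 / (3 * K0) * 2 powr ((1 - bin_entropy \<delta>) * real t) \<and>
          (\<forall>i\<in>{1..g}. X i \<subseteq> {0..\<sigma>} \<and> Y i \<subseteq> {0..\<sigma>}) \<and>
          (\<forall>i\<in>{1..g}. real (card (X i)) = sqrt (real_of_int \<sigma>) \<and>
                         real (card (Y i)) = sqrt (real_of_int \<sigma>)) \<and>
          (\<forall>i\<in>{1..g}. int (card (sumset (X i) (Y i))) = \<sigma>) \<and>
          (\<forall>i\<in>{1..g}. \<forall>j\<in>{1..g}. i \<noteq> j \<longrightarrow>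
              real (card (sumset (X i) (Y j))) \<le> \<alpha>)"
      unfolding Let_def apply (rule exI[of _ g], rule exI[of _ X], rule exI[of _ Y])
      by (rule conjI[OF gb XY])
  qed
qed


end
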